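(* For every integer $l\ge1$, let $\mathcal{I}_6(l)$ be the index coding instance on $[4l+1]$ with $A_{2i-1}=\{2j: j\in[2l]\setminus\{i\}\}\cup\{4l+1\}$ and $A_{2i}=\{2i-1\}$ for $i\in[2l]$, and $A_{4l+1}=\{2i-1: i\in[2l]\}$. Then the UMCD coding scheme is optimal for $\mathcal{I}_6(l)$, i.e. $\beta(\mathcal{I}_6(l))=\beta_{\text{UMCD}}(\mathcal{I}_6(l))$.
   Context: Index coding: messages $x_i\in\mathbb{F}_q^t$; receiver $i$ wants $x_i$ and knows $x_j$, $j\in A_i\subseteq[m]\setminus\{i\}$. A $(t,r)$ index code is an encoder $\phi:\mathbb{F}_q^{mt}\to\mathbb{F}_q^r$ plus decoders $\psi_i$ with $\psi_i(\phi(x),(x_j)_{j\in A_i})=x_i$ for all messages and all $i$; $\beta(\mathcal{I})$ is the infimum of $r/t$ over all $t$ and all such codes (over finite fields). $B_i=[m]\setminus(A_i\cup\{i\})$. For a $0/1$ matrix $\boldsymbol{G}$, $\boldsymbol{G}_{[k]}^L$ is the submatrix of its first $k$ rows and columns $L$; $\mathrm{mcm}$ is the maximum number of $1$-entries in distinct rows and columns (0 if no columns). UMCD algorithm: $N=[m]$, $k=0$; while $N\neq\emptyset$: $k\leftarrow k+1$; pick $w\in N$ minimizing $|A_w|$ over $N$ (arbitrary tie-breaking); row $k$ of $\boldsymbol{G}$ is the indicator of $\{w\}\cup A_w$; remove $w$ from $N$; remove every $i\in N$ with $\mathrm{mcm}(\boldsymbol{G}_{[k]}^{\{i\}\cup B_i})=\mathrm{mcm}(\boldsymbol{G}_{[k]}^{B_i})+1$;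 output $\beta_{\text{UMCD}}=k$. *)

theory Defs
  imports Complex_Main "HOL-Number_Theory.Prime_Powers"
begin

(* An index coding instance on [m] is given by m and the side-information map A
   (receiver i knows x_j for j in A i).  Receivers / messages are indexed 1..m. *)

(* vectors in F_q^t, represented as functions nat => nat with values < q on {0..<t}
   and 0 elsewhere (only the alphabet size of F_q matters for general codes) *)
definition vecs :: "nat \<Rightarrow> nat \<Rightarrow> (nat \<Rightarrow> nat) set" where
  "vecs q t = {v. (\<forall>k<t. v k < q) \<and> (\<forall>k\<ge>t. v k = 0)}"

definition msgs :: "nat \<Rightarrow> nat \<Rightarrow> nat \<Rightarrow> (nat \<Rightarrow> nat \<Rightarrow> nat) set" where
  "msgs q t m = {x. (\<forall>i\<in>{1..m}. x i \<in> vecs q t) \<and> (\<forall>i. i \<notin> {1..m} \<longrightarrow> x i = (\<lambda>_. 0))}"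

definition side_info :: "(nat \<Rightarrow> nat set) \<Rightarrow> nat \<Rightarrow> (nat \<Rightarrow> nat \<Rightarrow> nat) \<Rightarrow> (nat \<Rightarrow> nat \<Rightarrow> nat)" where
  "side_info A i x = (\<lambda>j. if j \<in> A i then x j else (\<lambda>_. 0))"

definition is_index_code ::
  "nat \<Rightarrow> (nat \<Rightarrow> nat set) \<Rightarrow> nat \<Rightarrow> nat \<Rightarrow> nat \<Rightarrow>
     ((nat \<Rightarrow> nat \<Rightarrow> nat) \<Rightarrow> (nat \<Rightarrow> nat)) \<Rightarrow>
     (nat \<Rightarrow> (nat \<Rightarrow> nat) \<Rightarrow> (nat \<Rightarrow> nat \<Rightarrow> nat) \<Rightarrow> (nat \<Rightarrow> nat)) \<Rightarrow> bool" where
  "is_index_code m A q t r phi psi \<longleftrightarrow>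
     (\<forall>x\<in>msgs q t m. phi x \<in> vecs q r) \<and>
     (\<forall>i\<in>{1..m}. \<forall>x\<in>msgs q t m. psi i (phi x) (side_info A i x) = x i)"

definition has_index_code :: "nat \<Rightarrow> (nat \<Rightarrow> nat set) \<Rightarrow> nat \<Rightarrow> nat \<Rightarrow> nat \<Rightarrow> bool" where
  "has_index_code m A q t r \<longleftrightarrow> (\<exists>phi psi. is_index_code m A q t r phi psi)"

definition beta_opt :: "nat \<Rightarrow> (nat \<Rightarrow> nat set) \<Rightarrow> real" where
  "beta_opt m A = Inf {real r / real t | q t r. primepow q \<and> t \<ge> 1 \<and> has_index_code m A q t r}"

definition Bset :: "nat \<Rightarrow> (nat \<Rightarrow> nat set) \<Rightarrow> nat \<Rightarrow> nat set" where
  "Bset m A i = {1..m} - (A i \<union> {i})"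

(* A 0/1 matrix with columns indexed by [m] is a list of rows; row a is the set of
   columns carrying a 1.  mcm rows L = mcm of the submatrix of all these rows and
   columns L: maximum number of 1-entries in distinct rows and distinct columns. *)
definition mcm :: "nat set list \<Rightarrow> nat set \<Rightarrow> nat" where
  "mcm rows L = Max {card M | M. M \<subseteq> {(a, c). a < length rows \<and> c \<in> L \<and> c \<in> rows ! a}
                                 \<and> inj_on fst M \<and> inj_on snd M}"

(* reachable states (N, first k rows of G) of the UMCD algorithm, for any tie-breaking *)
inductive umcd_state :: "nat \<Rightarrow> (nat \<Rightarrow> nat set) \<Rightarrow> nat set \<Rightarrow> nat set list \<Rightarrow> bool"
  for m :: nat and A :: "nat \<Rightarrow> nat set" where
  init: "umcd_state m A {1..m} []"
| step: "umcd_state m A N rows \<Longrightarrow> w \<in> N \<Longrightarrow> (\<forall>v\<in>N. card (A w) \<le> card (A v)) \<Longrightarrow>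
         rows' = rows @ [insert w (A w)] \<Longrightarrow>
         N' = {i \<in> N - {w}. mcm rows' (insert i (Bset m A i)) \<noteq> mcm rows' (Bset m A i) + 1} \<Longrightarrow>
         umcd_state m A N' rows'"

definition umcd_outputs :: "nat \<Rightarrow> (nat \<Rightarrow> nat set) \<Rightarrow> nat set" where
  "umcd_outputs m A = {length rows | rows. umcd_state m A {} rows}"

definition A6 :: "nat \<Rightarrow> nat \<Rightarrow> nat set" where
  "A6 l n = (if n = 4*l+1 then {2*i - 1 | i. i \<in> {1..2*l}}
             else if n \<in> {1..4*l} \<and> odd n then
               {2*j | j. j \<in> {1..2*l} - {(n+1) div 2}} \<union> {4*l+1}
             else if n \<in> {1..4*l} \<and> even n then {n - 1}
             else {})"

end

theory Submission
  imports Defs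
begin

definition adm :: "nat set list \<Rightarrow> nat set \<Rightarrow> (nat \<times> nat) set set" where
  "adm rows L = {M. M \<subseteq> {(a, c). a < length rows \<and> c \<in> L \<and> c \<in> rows ! a}
                                 \<and> inj_on fst M \<and> inj_on snd M}"

lemma mcm_adm: "mcm rows L = Max (card ` adm rows L)"
  unfolding mcm_def adm_def by (rule arg_cong[where f=Max]) auto

lemma adm_finite: "M \<in> adm rows L \<Longrightarrow> finite M"
proof -
  assume M: "M \<in> adm rows L"
  have "fst ` M \<subseteq> {..<length rows}" using M unfolding adm_def by auto
  hence "finite (fst ` M)" by (rule finite_subset) auto
  thus ?thesis using M unfolding adm_def using finite_imageD by blast
qed

lemma adm_card_len: "M \<in> adm rows L \<Longrightarrow> card M \<le> length rows"
proof -
  assume M: "M \<in> adm rows L"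
  have "fst ` M \<subseteq> {..<length rows}" using M unfolding adm_def by auto
  hence "card (fst ` M) \<le> length rows" using card_mono[of "{..<length rows}"] by fastforce
  moreover have "card (fst ` M) = card M" using M unfolding adm_def by (auto intro: card_image)
  ultimately show ?thesis by simp
qed

lemma adm_card_L: "finite L \<Longrightarrow> M \<in> adm rows L \<Longrightarrow> card M \<le> card L"
proof -
  assume L: "finite L" and M: "M \<in> adm rows L"
  have "snd ` M \<subseteq> L" using M unfolding adm_def by auto
  hence "card (snd ` M) \<le> card L" using card_mono L by blast
  moreover have "card (snd ` M) = card M" using M unfolding adm_def by (auto intro: card_image)
  ultimately show ?thesis by simp
qed

lemma cards_fin: "finite (card ` adm rows L)"
  by (rule finite_subset[of _ "{..length rows}"]) (auto dest: adm_card_len)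

lemma empty_adm: "{} \<in> adm rows L" unfolding adm_def by auto

lemma mcm_ge: "M \<in> adm rows L \<Longrightarrow> card M \<le> mcm rows L"
  unfolding mcm_adm using cards_fin by (rule Max_ge) auto

lemma mcm_obtain: "\<exists>M \<in> adm rows L. card M = mcm rows L"
proof -
  have "mcm rows L \<in> card ` adm rows L" unfolding mcm_adm
    using cards_fin empty_adm[of rows L] by (intro Max_in) auto
  thus ?thesis by auto
qed

lemma mcm_le_len: "mcm rows L \<le> length rows"
  using mcm_obtain adm_card_len by metis

lemma mcm_le_card: "finite L \<Longrightarrow> mcm rows L \<le> card L"
  using mcm_obtain adm_card_L by metis

lemma mcm_insert_zero: "(\<forall>a<length rows. c \<notin> rows ! a) \<Longrightarrow> mcm rows (insert c L) = mcm rows L"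
proof -
  assume h: "\<forall>a<length rows. c \<notin> rows ! a"
  have "adm rows (insert c L) = adm rows L" unfolding adm_def using h by auto
  thus ?thesis unfolding mcm_adm by simp
qed

lemma mcm_insert_le: "mcm rows (insert c L) \<le> mcm rows L + 1"
proof -
  obtain M where M: "M \<in> adm rows (insert c L)" "card M = mcm rows (insert c L)"
    using mcm_obtain by blast
  define M' where "M' = {p \<in> M. snd p \<noteq> c}"
  define M2 where "M2 = {p \<in> M. snd p = c}"
  have fin: "finite M" using M adm_finite by blast
  have "M' \<in> adm rows L" using M unfolding adm_def M'_def by (auto intro: inj_on_subset)
  hence c1: "card M' \<le> mcm rows L" by (rule mcm_ge)
  have "inj_on snd M2" using M unfolding adm_def M2_def by (auto intro: inj_on_subset)
  hence "card M2 = card (snd ` M2)" by (simp add: card_image)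
  also have "\<dots> \<le> card {c}" by (rule card_mono) (auto simp: M2_def)
  finally have c2: "card M2 \<le> 1" by simp
  have "M = M' \<union> M2" unfolding M'_def M2_def by auto
  hence "card M \<le> card M' + card M2" by (metis card_Un_le)
  thus ?thesis using c1 c2 M by simp
qed

lemma mcm_fun:
  assumes "\<And>a. a < length rows \<Longrightarrow> f a \<in> L \<and> f a \<in> rows ! a"
    and "inj_on f {..<length rows}"
  shows "mcm rows L = length rows"
proof -
  define M where "M = (\<lambda>a. (a, f a)) ` {..<length rows}"
  have "M \<in> adm rows L" unfolding adm_def M_def using assms
    by (auto simp: inj_on_def)
  hence "card M \<le> mcm rows L" by (rule mcm_ge)
  moreover have "card M = length rows" unfolding M_def
    by (subst card_image) (auto simp: inj_on_def)
  ultimately show ?thesis using mcm_le_len[of rows L] by simp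
qed

definition pr :: "nat \<Rightarrow> nat set" where "pr a = insert (2*a) {2*a-1}"

lemma A6_even: "1 \<le> a \<Longrightarrow> a \<le> 2*l \<Longrightarrow> A6 l (2*a) = {2*a-1}"
  unfolding A6_def by auto

lemma A6_odd: "1 \<le> c \<Longrightarrow> c \<le> 2*l \<Longrightarrow>
   A6 l (2*c-1) = insert (4*l+1) ((\<lambda>j. 2*j) ` ({1..2*l} - {c}))"
proof -
  assume c: "1 \<le> c" "c \<le> 2*l"
  have "2*c-1 \<noteq> 4*l+1" "2*c-1 \<in> {1..4*l}" "odd (2*c-1)" "(2*c-1+1) div 2 = c" using c by auto
  thus ?thesis unfolding A6_def by auto
qed

lemma A6_top: "A6 l (4*l+1) = (\<lambda>i. 2*i-1) ` {1..2*l}"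
  unfolding A6_def by auto

lemma classify: "(i::nat) \<in> {1..4*l+1} \<Longrightarrow> i = 4*l+1 \<or> (\<exists>c\<in>{1..2*l}. i = 2*c-1) \<or> (\<exists>a\<in>{1..2*l}. i = 2*a)"
proof -
  assume i: "i \<in> {1..4*l+1}"
  show ?thesis
  proof (cases "i = 4*l+1")
    case False
    show ?thesis
    proof (cases "even i")
      case True
      then obtain a where "i = 2*a" by blast
      thus ?thesis using i False by auto
    next
      case False
      then obtain c where "i = 2*c+1" using oddE by blast
      hence "i = 2*(c+1) - 1" by simp
      thus ?thesis using i \<open>i \<noteq> 4*l+1\<close> by (intro disjI2 disjI1 bexI[of _ "c+1"]) auto
    qed
  qed simp
qed

lemma card_A6_even: "1 \<le> a \<Longrightarrow> a \<le> 2*l \<Longrightarrow> card (A6 l (2*a)) = 1"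
  by (simp add: A6_even)

lemma card_A6_odd: "1 \<le> c \<Longrightarrow> c \<le> 2*l \<Longrightarrow> card (A6 l (2*c-1)) = 2*l"
proof -
  assume c: "1 \<le> c" "c \<le> 2*l"
  have "card ((\<lambda>j. 2*j) ` ({1..2*l} - {c})) = card ({1..2*l} - {c})"
    by (rule card_image) (auto simp: inj_on_def)
  also have "\<dots> = 2*l - 1" using c by simp
  finally have h: "card ((\<lambda>j::nat. 2*j) ` ({1..2*l} - {c})) = 2*l - 1" .
  have "4*l+1 \<notin> (\<lambda>j. 2*j) ` ({1..2*l} - {c})" by auto presburger
  thus ?thesis using h c unfolding A6_odd[OF c] by simp
qed

lemma card_A6_top: "card (A6 l (4*l+1)) = 2*l"
proof -
  have "card ((\<lambda>i. 2*i-1) ` {1..2*l}) = card {1..2*l}"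
    by (rule card_image) (auto simp: inj_on_def)
  thus ?thesis unfolding A6_top by simp
qed

lemma card_Bset:
  assumes "i \<in> {1..m}" "i \<notin> A i" "A i \<subseteq> {1..m}" "card (A i) = k"
  shows "card (Bset m A i) = m - (k+1)"
proof -
  have fin: "finite (A i)" using assms(3) finite_subset by blast
  have "card (Bset m A i) = card {1..m} - card (insert i (A i))"
    unfolding Bset_def using assms fin by (subst card_Diff_subset[symmetric]) auto
  thus ?thesis using assms fin by simp
qed

lemma inB_odd1: "c \<in> {1..2*l} \<Longrightarrow> 2*c \<in> Bset (4*l+1) (A6 l) (2*c-1)"
  unfolding Bset_def using A6_odd[of c l] by auto

lemma inB_odd2: "c \<in> {1..2*l} \<Longrightarrow> x \<in> {1..2*l} \<Longrightarrow> x \<noteq> c \<Longrightarrow> 2*x-1 \<in> Bset (4*l+1) (A6 l) (2*c-1)"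
  unfolding Bset_def using A6_odd[of c l] by auto presburger+

lemma inB_top: "x \<in> {1..2*l} \<Longrightarrow> 2*x \<in> Bset (4*l+1) (A6 l) (4*l+1)"
  unfolding Bset_def using A6_top[of l] by auto presburger+

lemma mcm_odd_phase1:
  assumes d: "distinct bs" and s: "set bs \<subseteq> {1..2*l}" and c: "c \<in> {1..2*l}"
  shows "mcm (map pr bs) (Bset (4*l+1) (A6 l) (2*c-1)) = length bs"
proof -
  define f where "f k = (if bs!k = c then 2*c else 2*(bs!k)-1)" for k
  have "mcm (map pr bs) (Bset (4*l+1) (A6 l) (2*c-1)) = length (map pr bs)"
  proof (rule mcm_fun[where f=f])
    fix k assume k: "k < length (map pr bs)"
    hence "bs!k \<in> set bs" by simp
    hence bk: "bs!k \<in> {1..2*l}" using s by blast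
    show "f k \<in> Bset (4*l+1) (A6 l) (2*c-1) \<and> f k \<in> map pr bs ! k"
      using k bk inB_odd1[OF c] inB_odd2[OF c bk] by (auto simp: f_def pr_def)
  next
    show "inj_on f {..<length (map pr bs)}"
    proof (rule inj_onI)
      fix k1 k2 assume k: "k1 \<in> {..<length (map pr bs)}" "k2 \<in> {..<length (map pr bs)}" "f k1 = f k2"
      hence "bs!k1 \<in> set bs" "bs!k2 \<in> set bs" by auto
      hence b: "bs!k1 \<in> {1..2*l}" "bs!k2 \<in> {1..2*l}" using s by blast+
      have "bs!k1 = bs!k2" using k(3) b unfolding f_def by (auto split: if_splits)
      thus "k1 = k2" using d k(1,2) nth_eq_iff_index_eq by auto
    qed
  qed
  thus ?thesis by simp
qed

lemma filt1:
  assumes d: "distinct as" and s: "set as \<subseteq> {1..2*l}" and a: "a \<in> {1..2*l}" "a \<notin> set as"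
    and N: "N = {1..4*l+1} - (\<lambda>x. 2*x) ` set as"
  shows "{i \<in> N - {2*a}. mcm (map pr (as@[a])) (insert i (Bset (4*l+1) (A6 l) i))
            \<noteq> mcm (map pr (as@[a])) (Bset (4*l+1) (A6 l) i) + 1} = N - {2*a}"
proof -
  let ?bs = "as@[a]"
  have d2: "distinct ?bs" and s2: "set ?bs \<subseteq> {1..2*l}" using d s a by auto
  have "mcm (map pr ?bs) (insert i (Bset (4*l+1) (A6 l) i))
            \<noteq> mcm (map pr ?bs) (Bset (4*l+1) (A6 l) i) + 1" if i: "i \<in> N - {2*a}" for i
  proof -
    have "i \<in> {1..4*l+1}" using i N by auto
    then consider "i = 4*l+1" | c where "c \<in> {1..2*l}" "i = 2*c-1" | b where "b \<in> {1..2*l}" "i = 2*b"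
      using classify by blast
    thus ?thesis
    proof cases
      case 1
      have "\<forall>k<length (map pr ?bs). i \<notin> map pr ?bs ! k"
      proof (intro allI impI)
        fix k assume k: "k < length (map pr ?bs)"
        hence "?bs!k \<in> {1..2*l}" using s2 by (metis length_map nth_mem subsetD)
        moreover have "map pr ?bs ! k = pr (?bs!k)" using k by (intro nth_map) simp
        ultimately show "i \<notin> map pr ?bs ! k" using 1 by (auto simp: pr_def)
      qed
      thus ?thesis by (simp add: mcm_insert_zero)
    next
      case 2
      have "mcm (map pr ?bs) (insert i (Bset (4*l+1) (A6 l) i)) \<le> length ?bs"
        using mcm_le_len[of "map pr ?bs"] by simp
      thus ?thesis using mcm_odd_phase1[OF d2 s2 2(1)] 2(2) by simp
    next
      case 3
      have "b \<notin> set ?bs" using i N 3 by auto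
      have "\<forall>k<length (map pr ?bs). i \<notin> map pr ?bs ! k"
      proof (intro allI impI)
        fix k assume k: "k < length (map pr ?bs)"
        hence "?bs!k \<in> set ?bs" by (metis length_map nth_mem)
        hence "?bs!k \<in> {1..2*l}" "?bs!k \<noteq> b" using s2 \<open>b \<notin> set ?bs\<close> by blast+
        moreover have "map pr ?bs ! k = pr (?bs!k)" using k by (intro nth_map) simp
        ultimately show "i \<notin> map pr ?bs ! k" using 3 by (auto simp: pr_def)
      qed
      thus ?thesis by (simp add: mcm_insert_zero)
    qed
  qed
  thus ?thesis by blast
qed

lemma core2:
  assumes "mcm R (insert i B) = 2*l+1" "finite B" "card B = 2*l"
  shows "mcm R (insert i B) = mcm R B + 1"
  using assms mcm_le_card[of B R] mcm_insert_le[of R i B] by linarith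

lemma A6_sub: "A6 l i \<subseteq> {1..4*l+1}"
  unfolding A6_def by auto

lemma card_B_odd: "c \<in> {1..2*l} \<Longrightarrow> card (Bset (4*l+1) (A6 l) (2*c-1)) = 2*l"
proof -
  assume c: "c \<in> {1..2*l}"
  have "2*c-1 \<notin> A6 l (2*c-1)" using A6_odd[of c l] c by auto
  hence "card (Bset (4*l+1) (A6 l) (2*c-1)) = 4*l+1 - (2*l+1)"
    using c card_A6_odd[of c l] A6_sub by (intro card_Bset) auto
  thus ?thesis by simp
qed

lemma card_B_top: "card (Bset (4*l+1) (A6 l) (4*l+1)) = 2*l"
proof -
  have "4*l+1 \<notin> A6 l (4*l+1)" using A6_top[of l] by auto
  hence "card (Bset (4*l+1) (A6 l) (4*l+1)) = 4*l+1 - (2*l+1)"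
    using card_A6_top[of l] A6_sub by (intro card_Bset) auto
  thus ?thesis by simp
qed

lemma finB: "finite (Bset m A i)" unfolding Bset_def by simp

lemma filt2:
  assumes d: "distinct as" and s: "set as = {1..2*l}"
    and N: "N = {1..4*l+1} - (\<lambda>x. 2*x) ` set as" and w: "w \<in> N"
  shows "{i \<in> N - {w}. mcm (map pr as @ [insert w (A6 l w)]) (insert i (Bset (4*l+1) (A6 l) i))
            \<noteq> mcm (map pr as @ [insert w (A6 l w)]) (Bset (4*l+1) (A6 l) i) + 1} = {}"
proof -
  let ?R = "map pr as @ [insert w (A6 l w)]"
  have len: "length as = 2*l" using distinct_card[OF d] s by simp
  have lenR: "length ?R = 2*l+1" using len by simp
  have Rk: "?R ! k = pr (as!k)" if "k < 2*l" for k using that len by (simp add: nth_append)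
  have Rl: "?R ! (2*l) = insert w (A6 l w)" using len by (simp add: nth_append)
  have ask: "as!k \<in> {1..2*l}" if "k < 2*l" for k proof -
    have "as!k \<in> set as" using that len by simp
    thus ?thesis using s by blast
  qed
  have injas: "k1 = k2" if "as!k1 = as!k2" "k1 < 2*l" "k2 < 2*l" for k1 k2
    using that d len by (simp add: nth_eq_iff_index_eq)
  have Nodd: "x = 4*l+1 \<or> (\<exists>c\<in>{1..2*l}. x = 2*c-1)" if "x \<in> N" for x
  proof -
    have "x \<in> {1..4*l+1}" using that N by auto
    moreover have "\<not> (\<exists>a\<in>{1..2*l}. x = 2*a)" using that N s by auto
    ultimately show ?thesis using classify[of x l] by blast
  qed
  have "mcm ?R (insert i (Bset (4*l+1) (A6 l) i)) = mcm ?R (Bset (4*l+1) (A6 l) i) + 1"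
    if i: "i \<in> N - {w}" for i
  proof -
    consider
      (A) c where "c \<in> {1..2*l}" "i = 2*c-1" "w = 4*l+1"
    | (B) c d where "c \<in> {1..2*l}" "i = 2*c-1" "d \<in> {1..2*l}" "w = 2*d-1" "c \<noteq> d"
    | (C) d where "i = 4*l+1" "d \<in> {1..2*l}" "w = 2*d-1"
    proof -
      have iw: "i \<noteq> w" using i by auto
      have hi: "i = 4*l+1 \<or> (\<exists>c\<in>{1..2*l}. i = 2*c-1)" using Nodd[of i] i by auto
      have hw: "w = 4*l+1 \<or> (\<exists>d\<in>{1..2*l}. w = 2*d-1)" using Nodd[OF w] .
      show ?thesis
      proof (cases "i = 4*l+1")
        case True
        then obtain d where "d \<in> {1..2*l}" "w = 2*d-1" using hw iw by auto
        thus ?thesis using that(3) True by blast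
      next
        case False
        then obtain c where c: "c \<in> {1..2*l}" "i = 2*c-1" using hi by auto
        show ?thesis
        proof (cases "w = 4*l+1")
          case True thus ?thesis using that(1) c by blast
        next
          case False
          then obtain d where d: "d \<in> {1..2*l}" "w = 2*d-1" using hw by auto
          hence "c \<noteq> d" using c iw by auto
          thus ?thesis using that(2) c d by blast
        qed
      qed
    qed
    thus ?thesis
    proof cases
      case A
      define f where "f k = (if k = 2*l then 2*c-1 else if as!k = c then 2*c else 2*(as!k)-1)" for k
      have "mcm ?R (insert i (Bset (4*l+1) (A6 l) i)) = length ?R"
      proof (rule mcm_fun[where f=f])
        fix k assume k: "k < length ?R"
        show "f k \<in> insert i (Bset (4*l+1) (A6 l) i) \<and> f k \<in> ?R ! k"
        proof (cases "k = 2*l")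
          case True thus ?thesis using A Rl A6_top[of l] by (auto simp: f_def)
        next
          case False
          hence k': "k < 2*l" using k lenR by simp
          thus ?thesis using A Rk[OF k'] ask[OF k'] inB_odd1[OF A(1)] inB_odd2[OF A(1) ask[OF k']]
            by (auto simp: f_def pr_def)
        qed
      next
        show "inj_on f {..<length ?R}"
        proof (rule inj_onI)
          fix k1 k2 assume k: "k1 \<in> {..<length ?R}" "k2 \<in> {..<length ?R}" "f k1 = f k2"
          show "k1 = k2"
          proof (cases "k1 = 2*l \<or> k2 = 2*l")
            case True
            have ne: "f k \<noteq> f (2*l)" if "k < 2*l" for k
              using that ask[OF that] A(1) unfolding f_def by auto
            show ?thesis
            proof (rule ccontr)
              assume "k1 \<noteq> k2"
              hence "(k1 = 2*l \<and> k2 < 2*l) \<or> (k2 = 2*l \<and> k1 < 2*l)" using True k lenR by auto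
              thus False using ne k(3) by metis
            qed
          next
            case False
            hence kk: "k1 < 2*l" "k2 < 2*l" using k lenR by auto
            have "as!k1 = as!k2" using k(3) False ask[OF kk(1)] ask[OF kk(2)] unfolding f_def
              by (auto split: if_splits)
            thus ?thesis using injas kk by blast
          qed
        qed
      qed
      thus ?thesis using lenR A card_B_odd[OF A(1)] by (intro core2) (auto simp: finB)
    next
      case B
      define f where "f k = (if k = 2*l then 2*c else 2*(as!k)-1)" for k
      have "mcm ?R (insert i (Bset (4*l+1) (A6 l) i)) = length ?R"
      proof (rule mcm_fun[where f=f])
        fix k assume k: "k < length ?R"
        show "f k \<in> insert i (Bset (4*l+1) (A6 l) i) \<and> f k \<in> ?R ! k"
        proof (cases "k = 2*l")
          case True thus ?thesis using B Rl A6_odd[of d l] inB_odd1[OF B(1)] by (auto simp: f_def)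
        next
          case False
          hence k': "k < 2*l" using k lenR by simp
          thus ?thesis using B Rk[OF k'] ask[OF k'] inB_odd2[OF B(1) ask[OF k']]
            by (auto simp: f_def pr_def)
        qed
      next
        show "inj_on f {..<length ?R}"
        proof (rule inj_onI)
          fix k1 k2 assume k: "k1 \<in> {..<length ?R}" "k2 \<in> {..<length ?R}" "f k1 = f k2"
          show "k1 = k2"
          proof (cases "k1 = 2*l \<or> k2 = 2*l")
            case True
            have ne: "f k \<noteq> f (2*l)" if "k < 2*l" for k
              using that ask[OF that] unfolding f_def by (auto; presburger)
            show ?thesis
            proof (rule ccontr)
              assume "k1 \<noteq> k2"
              hence "(k1 = 2*l \<and> k2 < 2*l) \<or> (k2 = 2*l \<and> k1 < 2*l)" using True k lenR by auto
              thus False using ne k(3) by metis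
            qed
          next
            case False
            hence kk: "k1 < 2*l" "k2 < 2*l" using k lenR by auto
            have "as!k1 = as!k2" using k(3) False ask[OF kk(1)] ask[OF kk(2)] unfolding f_def
              by (auto split: if_splits)
            thus ?thesis using injas kk by blast
          qed
        qed
      qed
      thus ?thesis using lenR B card_B_odd[OF B(1)] by (intro core2) (auto simp: finB)
    next
      case C
      define f where "f k = (if k = 2*l then 4*l+1 else 2*(as!k))" for k
      have "mcm ?R (insert i (Bset (4*l+1) (A6 l) i)) = length ?R"
      proof (rule mcm_fun[where f=f])
        fix k assume k: "k < length ?R"
        show "f k \<in> insert i (Bset (4*l+1) (A6 l) i) \<and> f k \<in> ?R ! k"
        proof (cases "k = 2*l")
          case True thus ?thesis using C Rl A6_odd[of d l] by (auto simp: f_def)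
        next
          case False
          hence k': "k < 2*l" using k lenR by simp
          thus ?thesis using C Rk[OF k'] ask[OF k'] inB_top[OF ask[OF k']]
            by (auto simp: f_def pr_def)
        qed
      next
        show "inj_on f {..<length ?R}"
        proof (rule inj_onI)
          fix k1 k2 assume k: "k1 \<in> {..<length ?R}" "k2 \<in> {..<length ?R}" "f k1 = f k2"
          show "k1 = k2"
          proof (cases "k1 = 2*l \<or> k2 = 2*l")
            case True
            have ne: "f k \<noteq> f (2*l)" if "k < 2*l" for k
              using that ask[OF that] unfolding f_def by (auto; presburger)
            show ?thesis
            proof (rule ccontr)
              assume "k1 \<noteq> k2"
              hence "(k1 = 2*l \<and> k2 < 2*l) \<or> (k2 = 2*l \<and> k1 < 2*l)" using True k lenR by auto
              thus False using ne k(3) by metis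
            qed
          next
            case False
            hence kk: "k1 < 2*l" "k2 < 2*l" using k lenR by auto
            have "as!k1 = as!k2" using k(3) False unfolding f_def by auto
            thus ?thesis using injas kk by blast
          qed
        qed
      qed
      thus ?thesis using lenR C card_B_top[of l] by (intro core2) (auto simp: finB)
    qed
  qed
  thus ?thesis by auto
qed

lemma card_A6_ge1: "l \<ge> 1 \<Longrightarrow> v \<in> {1..4*l+1} \<Longrightarrow> card (A6 l v) \<ge> 1"
  using classify[of v l] card_A6_top[of l] card_A6_odd[of _ l] card_A6_even[of _ l] by force

lemma umcd_inv:
  assumes "umcd_state (4*l+1) (A6 l) N rows" and l: "l \<ge> 1"
  shows "(\<exists>as. distinct as \<and> set as \<subseteq> {1..2*l} \<and> rows = map pr as \<and> N = {1..4*l+1} - (\<lambda>x. 2*x) ` set as)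
         \<or> (N = {} \<and> length rows = 2*l+1)"
  using assms(1)
proof (induction rule: umcd_state.induct)
  case init
  show ?case by (intro disjI1 exI[of _ "[]"]) simp
next
  case (step N rows w rows' N')
  from step.IH step.hyps(2) obtain as where as: "distinct as" "set as \<subseteq> {1..2*l}" "rows = map pr as"
     "N = {1..4*l+1} - (\<lambda>x. 2*x) ` set as" by auto
  show ?case
  proof (cases "set as = {1..2*l}")
    case True
    have "N' = {}" using filt2[OF as(1) True as(4) step.hyps(2)] step.hyps(4,5) as(3) by simp
    moreover have "length as = 2*l" using distinct_card[OF as(1)] True by simp
    ultimately show ?thesis using step.hyps(4) as(3) by simp
  next
    case False
    then obtain b where b: "b \<in> {1..2*l}" "b \<notin> set as" using as(2) by blast
    have "2*b \<in> N" using as(4) b by auto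
    hence cw: "card (A6 l w) \<le> 1" using step.hyps(3) card_A6_even[of b l] b by force
    have wN: "w \<in> {1..4*l+1}" using step.hyps(2) as(4) by auto
    obtain a where a: "a \<in> {1..2*l}" "w = 2*a"
    proof -
      from classify[OF wN] consider "w = 4*l+1" | c where "c \<in> {1..2*l}" "w = 2*c-1"
         | a where "a \<in> {1..2*l}" "w = 2*a" by blast
      thus ?thesis
      proof cases
        case 1 thus ?thesis using cw card_A6_top[of l] l by simp
      next
        case 2 thus ?thesis using cw card_A6_odd[of c l] l by simp
      next
        case 3 thus ?thesis using that by blast
      qed
    qed
    have anot: "a \<notin> set as" using step.hyps(2) as(4) a by auto
    have r: "rows' = map pr (as @ [a])" using step.hyps(4) as(3) a A6_even[of a l] by (simp add: pr_def)
    have "N' = N - {2*a}" using filt1[OF as(1) as(2) a(1) anot as(4)] step.hyps(5) r a(2) by simp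
    hence "N' = {1..4*l+1} - (\<lambda>x. 2*x) ` set (as @ [a])" using as(4) by auto
    thus ?thesis using r as anot a by (intro disjI1 exI[of _ "as @ [a]"]) auto
  qed
qed

lemma reach:
  assumes l: "l \<ge> 1"
  shows "k \<le> 2*l \<Longrightarrow> umcd_state (4*l+1) (A6 l) ({1..4*l+1} - (\<lambda>x. 2*x) ` {1..k}) (map pr [1..<k+1])"
proof (induction k)
  case 0
  show ?case using umcd_state.init by simp
next
  case (Suc k)
  let ?as = "[1..<k+1]"
  let ?N = "{1..4*l+1} - (\<lambda>x. 2*x) ` set ?as"
  let ?w = "2*(k+1)"
  have kle: "k \<le> 2*l" using Suc.prems by simp
  have sa0: "set ?as = {1..k}" by auto
  have st: "umcd_state (4*l+1) (A6 l) ?N (map pr ?as)" using Suc.IH[OF kle] unfolding sa0 .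
  have a: "k+1 \<in> {1..2*l}" "k+1 \<notin> set ?as" using Suc.prems by auto
  have wN: "?w \<in> ?N" using Suc.prems by auto
  have mn: "\<forall>v\<in>?N. card (A6 l ?w) \<le> card (A6 l v)"
    using card_A6_even[of "k+1" l] a card_A6_ge1[OF l] by auto
  have "umcd_state (4*l+1) (A6 l) {i \<in> ?N - {?w}. mcm (map pr (?as@[k+1])) (insert i (Bset (4*l+1) (A6 l) i))
            \<noteq> mcm (map pr (?as@[k+1])) (Bset (4*l+1) (A6 l) i) + 1} (map pr (?as@[k+1]))"
    by (rule umcd_state.step[OF st wN mn]) (use A6_even[of "k+1" l] a in \<open>simp_all add: pr_def\<close>)
  also have "{i \<in> ?N - {?w}. mcm (map pr (?as@[k+1])) (insert i (Bset (4*l+1) (A6 l) i))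
            \<noteq> mcm (map pr (?as@[k+1])) (Bset (4*l+1) (A6 l) i) + 1} = ?N - {?w}"
    by (rule filt1) (use a in auto)
  also have "?N - {?w} = {1..4*l+1} - (\<lambda>x. 2*x) ` {1..Suc k}"
    using image_eqI[of "2*(k+1)" "\<lambda>x. 2*x" "k+1" "{1..Suc k}"] by auto
  also have "?as @ [k+1] = [1..<Suc k + 1]" by simp
  finally show ?case .
qed

lemma reach_final:
  assumes l: "l \<ge> 1"
  shows "umcd_state (4*l+1) (A6 l) {} (map pr [1..<2*l+1] @ [insert (4*l+1) (A6 l (4*l+1))])"
proof -
  let ?as = "[1..<2*l+1]"
  let ?N = "{1..4*l+1} - (\<lambda>x. 2*x) ` set ?as"
  let ?w = "4*l+1"
  have sa: "set ?as = {1..2*l}" by auto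
  have st: "umcd_state (4*l+1) (A6 l) ?N (map pr ?as)" using reach[OF l order.refl] unfolding sa .
  have wN: "?w \<in> ?N" by auto
  have mn: "\<forall>v\<in>?N. card (A6 l ?w) \<le> card (A6 l v)"
  proof
    fix v assume v: "v \<in> ?N"
    hence "v \<in> {1..4*l+1}" by auto
    then consider "v = 4*l+1" | c where "c \<in> {1..2*l}" "v = 2*c-1"
         | a where "a \<in> {1..2*l}" "v = 2*a" using classify by blast
    thus "card (A6 l ?w) \<le> card (A6 l v)"
    proof cases
      case 1 thus ?thesis by simp
    next
      case 2 thus ?thesis using card_A6_top[of l] card_A6_odd[of c l] by simp
    next
      case 3 thus ?thesis using v sa by auto
    qed
  qed
  have "umcd_state (4*l+1) (A6 l) {i \<in> ?N - {?w}. mcm (map pr ?as @ [insert ?w (A6 l ?w)]) (insert i (Bset (4*l+1) (A6 l) i))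
            \<noteq> mcm (map pr ?as @ [insert ?w (A6 l ?w)]) (Bset (4*l+1) (A6 l) i) + 1} (map pr ?as @ [insert ?w (A6 l ?w)])"
    by (rule umcd_state.step[OF st wN mn]) simp_all
  also have "{i \<in> ?N - {?w}. mcm (map pr ?as @ [insert ?w (A6 l ?w)]) (insert i (Bset (4*l+1) (A6 l) i))
            \<noteq> mcm (map pr ?as @ [insert ?w (A6 l ?w)]) (Bset (4*l+1) (A6 l) i) + 1} = {}"
    by (rule filt2) (use sa wN in auto)
  finally show ?thesis .
qed

lemma outputs6:
  assumes l: "l \<ge> 1"
  shows "umcd_outputs (4*l+1) (A6 l) = {2*l+1}"
proof -
  have "k = 2*l+1" if kin: "k \<in> umcd_outputs (4*l+1) (A6 l)" for k
  proof -
    obtain rows where r: "k = length rows" "umcd_state (4*l+1) (A6 l) {} rows"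
      using kin unfolding umcd_outputs_def by blast
    from umcd_inv[OF r(2) l] show ?thesis
    proof
      assume "\<exists>as. distinct as \<and> set as \<subseteq> {1..2*l} \<and> rows = map pr as \<and> {} = {1..4*l+1} - (\<lambda>x. 2*x) ` set as"
      then obtain as where "{} = {1..4*l+1} - (\<lambda>x. 2*x) ` set as" by blast
      hence "(1::nat) \<in> (\<lambda>x. 2*x) ` set as" by auto
      thus ?thesis by auto
    next
      assume "{} = {} \<and> length rows = 2*l+1"
      thus ?thesis using r by simp
    qed
  qed
  moreover have "2*l+1 \<in> umcd_outputs (4*l+1) (A6 l)"
    unfolding umcd_outputs_def using reach_final[OF l] by force
  ultimately show ?thesis by blast
qed

lemma card_fset:
  assumes S: "finite S" and V: "finite V"
  shows "card {x. (\<forall>i\<in>S. x i \<in> V) \<and> (\<forall>i. i \<notin> S \<longrightarrow> x i = z)} = card V ^ card S"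
proof -
  let ?X = "{x. (\<forall>i\<in>S. x i \<in> V) \<and> (\<forall>i. i \<notin> S \<longrightarrow> x i = z)}"
  have "bij_betw (\<lambda>x. restrict x S) ?X (PiE S (\<lambda>_. V))"
  proof (rule bij_betwI')
    fix x y assume xy: "x \<in> ?X" "y \<in> ?X"
    show "(restrict x S = restrict y S) = (x = y)"
    proof
      assume r: "restrict x S = restrict y S"
      show "x = y"
      proof
        fix i show "x i = y i"
        proof (cases "i \<in> S")
          case True thus ?thesis using r by (metis restrict_apply')
        next
          case False thus ?thesis using xy by simp
        qed
      qed
    qed simp
  next
    fix x assume "x \<in> ?X" thus "restrict x S \<in> PiE S (\<lambda>_. V)" by auto
  next
    fix f assume f: "f \<in> PiE S (\<lambda>_. V)"
    let ?x = "\<lambda>i. if i \<in> S then f i else z"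
    have "?x \<in> ?X" using f by auto
    moreover have "f = restrict ?x S" using f by (auto simp: fun_eq_iff restrict_def PiE_def extensional_def)
    ultimately show "\<exists>x\<in>?X. f = restrict x S" by blast
  qed
  hence "card ?X = card (PiE S (\<lambda>_. V))" by (rule bij_betw_same_card)
  also have "\<dots> = card V ^ card S" using S by (simp add: card_PiE)
  finally show ?thesis .
qed

lemma card_vecs: "card (vecs q t) = q ^ t"
proof -
  have "vecs q t = {v. (\<forall>k\<in>{..<t}. v k \<in> {..<q}) \<and> (\<forall>k. k \<notin> {..<t} \<longrightarrow> v k = 0)}"
    unfolding vecs_def by auto
  thus ?thesis using card_fset[of "{..<t}" "{..<q}" 0] by simp
qed

lemma finite_vecs: "finite (vecs q t)"
proof -
  have "vecs q t = {v. (\<forall>k\<in>{..<t}. v k \<in> {..<q}) \<and> (\<forall>k. k \<notin> {..<t} \<longrightarrow> v k = 0)}"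
    unfolding vecs_def by auto
  moreover have "card (vecs q t) = q ^ t" by (rule card_vecs)
  have "bij_betw (\<lambda>x. restrict x {..<t}) (vecs q t) (PiE {..<t} (\<lambda>_. {..<q}))"
  proof (rule bij_betwI')
    fix x y assume xy: "x \<in> vecs q t" "y \<in> vecs q t"
    show "(restrict x {..<t} = restrict y {..<t}) = (x = y)"
    proof
      assume r: "restrict x {..<t} = restrict y {..<t}"
      show "x = y"
      proof
        fix i show "x i = y i"
        proof (cases "i \<in> {..<t}")
          case True thus ?thesis using r by (metis restrict_apply')
        next
          case False thus ?thesis using xy by (simp add: vecs_def)
        qed
      qed
    qed simp
  next
    fix x assume "x \<in> vecs q t" thus "restrict x {..<t} \<in> PiE {..<t} (\<lambda>_. {..<q})" by (auto simp: vecs_def)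
  next
    fix f assume f: "f \<in> PiE {..<t} (\<lambda>_. {..<q})"
    let ?x = "\<lambda>i. if i \<in> {..<t} then f i else 0"
    have "?x \<in> vecs q t" using f by (auto simp: vecs_def)
    moreover have "f = restrict ?x {..<t}" using f by (auto simp: fun_eq_iff restrict_def PiE_def extensional_def)
    ultimately show "\<exists>x\<in>vecs q t. f = restrict x {..<t}" by blast
  qed
  thus ?thesis by (simp add: bij_betw_finite finite_PiE)
qed

lemma lower_bound:
  assumes l: "l \<ge> 1" and q: "primepow q" and code: "is_index_code (4*l+1) (A6 l) q t r phi psi"
  shows "(2*l+1) * t \<le> r"
proof -
  define S where "S = insert (4*l+1) ((\<lambda>a. 2*a) ` {1..2*l})"
  define X where "X = {x. (\<forall>i\<in>S. x i \<in> vecs q t) \<and> (\<forall>i. i \<notin> S \<longrightarrow> x i = (\<lambda>_. 0::nat))}"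
  define Z where "Z = (\<lambda>j::nat. (\<lambda>_::nat. 0::nat))"
  have finS: "finite S" unfolding S_def by simp
  have cardS: "card S = 2*l+1"
  proof -
    have "card ((\<lambda>a. 2*a) ` {1..2*l}) = 2*l" by (subst card_image) (auto simp: inj_on_def)
    moreover have "4*l+1 \<notin> (\<lambda>a. 2*a) ` {1..2*l}" by auto presburger
    ultimately show ?thesis unfolding S_def by simp
  qed
  have Sm: "S \<subseteq> {1..4*l+1}" unfolding S_def by auto
  have q1: "q > 1" using q primepow_gt_Suc_0 by auto
  have z: "(\<lambda>_. 0::nat) \<in> vecs q t" using q1 unfolding vecs_def by auto
  have XM: "X \<subseteq> msgs q t (4*l+1)" unfolding X_def msgs_def using Sm z by auto
  have disj: "A6 l i \<inter> S = {}" if iS: "i \<in> S" for i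
  proof (cases "i = 4*l+1")
    case True
    hence "A6 l i = (\<lambda>i. 2*i-1) ` {1..2*l}" using A6_top[of l] by simp
    thus ?thesis unfolding S_def by auto presburger+
  next
    case False
    then obtain a where a: "a \<in> {1..2*l}" "i = 2*a" using iS unfolding S_def by auto
    thus ?thesis using A6_even[of a l] unfolding S_def by auto presburger+
  qed
  have si: "side_info (A6 l) i x = Z" if "i \<in> S" "x \<in> X" for i x
    using disj[OF that(1)] that(2) unfolding side_info_def Z_def X_def by (auto simp: fun_eq_iff)
  have dec: "x i = psi i (phi x) Z" if "i \<in> S" "x \<in> X" for i x
  proof -
    have "x \<in> msgs q t (4*l+1)" using XM that(2) by blast
    moreover have "i \<in> {1..4*l+1}" using Sm that(1) by blast
    ultimately have "psi i (phi x) (side_info (A6 l) i x) = x i"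
      using code unfolding is_index_code_def by blast
    thus ?thesis using si[OF that] by simp
  qed
  have inj: "inj_on phi X"
  proof (rule inj_onI)
    fix x y assume xy: "x \<in> X" "y \<in> X" "phi x = phi y"
    show "x = y"
    proof
      fix i show "x i = y i"
      proof (cases "i \<in> S")
        case True thus ?thesis using dec[OF True xy(1)] dec[OF True xy(2)] xy(3) by simp
      next
        case False thus ?thesis using xy unfolding X_def by simp
      qed
    qed
  qed
  have img: "phi ` X \<subseteq> vecs q r" using code XM unfolding is_index_code_def by auto
  have "card X = (q^t) ^ (2*l+1)"
    unfolding X_def using card_fset[OF finS finite_vecs, where z="\<lambda>_. 0"] cardS card_vecs by simp
  moreover have "card X \<le> card (vecs q r)"
    using card_inj_on_le[OF inj img finite_vecs] .
  ultimately have "(q ^ t) ^ (2*l+1) \<le> q ^ r" by (simp only: card_vecs)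
  hence "q ^ (t * (2*l+1)) \<le> q ^ r" by (simp only: power_mult)
  thus ?thesis using power_le_imp_le_exp[OF q1] by (metis mult.commute)
qed

definition phi6 :: "nat \<Rightarrow> (nat \<Rightarrow> nat \<Rightarrow> nat) \<Rightarrow> nat \<Rightarrow> nat" where
  "phi6 l x = (\<lambda>k. if k < 2*l then (x (2*k+1) 0 + x (2*k+2) 0) mod 2
                   else if k = 2*l then (x (4*l+1) 0 + (\<Sum>j\<in>{1..2*l}. x (2*j) 0)) mod 2 else 0)"

definition val6 :: "nat \<Rightarrow> nat \<Rightarrow> (nat \<Rightarrow> nat) \<Rightarrow> (nat \<Rightarrow> nat \<Rightarrow> nat) \<Rightarrow> nat" where
  "val6 l i y s = (if i = 4*l+1 then (y (2*l) + (\<Sum>j\<in>{1..2*l}. (y (j-1) + s (2*j-1) 0) mod 2)) mod 2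
     else if even i then (y (i div 2 - 1) + s (i-1) 0) mod 2
     else (y ((i+1) div 2 - 1) + (y (2*l) + s (4*l+1) 0 + (\<Sum>j\<in>{1..2*l}-{(i+1) div 2}. s (2*j) 0)) mod 2) mod 2)"

definition psi6 :: "nat \<Rightarrow> nat \<Rightarrow> (nat \<Rightarrow> nat) \<Rightarrow> (nat \<Rightarrow> nat \<Rightarrow> nat) \<Rightarrow> (nat \<Rightarrow> nat)" where
  "psi6 l i y s = (\<lambda>k. if k = 0 then val6 l i y s else 0)"

lemma cancel2: "((a + s) mod 2 + s) mod 2 = a mod (2::nat)"
proof -
  have "((a + s) mod 2 + s) mod 2 = (a + s + s) mod 2" by (simp add: mod_add_left_eq)
  also have "a + s + s = a + s * 2" by simp
  also have "(a + s * 2) mod 2 = a mod 2" by simp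
  finally show ?thesis .
qed

lemma pairval: "a \<in> {1..2*l} \<Longrightarrow> phi6 l x (a-1) = (x (2*a-1) 0 + x (2*a) 0) mod 2"
proof -
  assume a: "a \<in> {1..2*l}"
  hence "a - 1 < 2*l" "2*(a-1)+1 = 2*a-1" "2*(a-1)+2 = 2*a" by auto
  thus ?thesis unfolding phi6_def by simp
qed

lemma decode6:
  assumes l: "l \<ge> 1" and x: "x \<in> msgs 2 1 (4*l+1)" and i: "i \<in> {1..4*l+1}"
  shows "psi6 l i (phi6 l x) (side_info (A6 l) i x) = x i"
proof -
  define b where "b j = x j 0" for j
  have bl: "b j < 2" if "j \<in> {1..4*l+1}" for j using x that unfolding msgs_def vecs_def b_def by auto
  have xz: "x i k = 0" if "k \<noteq> 0" for k using x i that unfolding msgs_def vecs_def by auto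
  let ?s = "side_info (A6 l) i x"
  let ?y = "phi6 l x"
  have sv: "?s j 0 = b j" if "j \<in> A6 l i" for j using that unfolding side_info_def b_def by simp
  have "val6 l i ?y ?s = b i"
  proof -
    from classify[OF i] consider "i = 4*l+1" | c where "c \<in> {1..2*l}" "i = 2*c-1"
         | a where "a \<in> {1..2*l}" "i = 2*a" by blast
    thus ?thesis
    proof cases
      case 1
      have A: "A6 l i = (\<lambda>i. 2*i-1) ` {1..2*l}" using 1 A6_top[of l] by simp
      have tm: "(?y (j-1) + ?s (2*j-1) 0) mod 2 = b (2*j)" if j: "j \<in> {1..2*l}" for j
      proof -
        have "?s (2*j-1) 0 = b (2*j-1)" using sv A j by auto
        hence "(?y (j-1) + ?s (2*j-1) 0) mod 2 = ((b (2*j) + b (2*j-1)) mod 2 + b (2*j-1)) mod 2"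
          using pairval[of j l x] j unfolding b_def by (simp add: add.commute)
        also have "\<dots> = b (2*j) mod 2" by (rule cancel2)
        also have "\<dots> = b (2*j)" using bl[of "2*j"] j by auto
        finally show ?thesis .
      qed
      have "(\<Sum>j\<in>{1..2*l}. (?y (j-1) + ?s (2*j-1) 0) mod 2) = (\<Sum>j\<in>{1..2*l}. b (2*j))"
        using tm by (intro sum.cong) auto
      moreover have "?y (2*l) = (b (4*l+1) + (\<Sum>j\<in>{1..2*l}. b (2*j))) mod 2"
        unfolding phi6_def b_def by simp
      ultimately have "val6 l i ?y ?s = ((b (4*l+1) + (\<Sum>j\<in>{1..2*l}. b (2*j))) mod 2 + (\<Sum>j\<in>{1..2*l}. b (2*j))) mod 2"
        unfolding val6_def using 1 by simp
      also have "\<dots> = b (4*l+1) mod 2" by (rule cancel2)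
      also have "\<dots> = b i" using 1 bl[of "4*l+1"] by simp
      finally show ?thesis .
    next
      case 2
      have A: "A6 l i = insert (4*l+1) ((\<lambda>j. 2*j) ` ({1..2*l} - {c}))" using 2 A6_odd[of c l] by simp
      have ie: "\<not> even i" "i \<noteq> 4*l+1" "(i+1) div 2 = c" using 2 by auto
      define T' where "T' = (\<Sum>j\<in>{1..2*l}-{c}. b (2*j))"
      have s1: "?s (4*l+1) 0 = b (4*l+1)" using sv A by simp
      have s2: "(\<Sum>j\<in>{1..2*l}-{c}. ?s (2*j) 0) = T'" unfolding T'_def using sv A by (intro sum.cong) auto
      have T: "(\<Sum>j\<in>{1..2*l}. b (2*j)) = b (2*c) + T'" unfolding T'_def using 2
        by (subst sum.remove[of _ c]) auto
      have y2: "?y (2*l) = (b (4*l+1) + (b (2*c) + T')) mod 2"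
        unfolding phi6_def using T unfolding b_def by simp
      have "(?y (2*l) + ?s (4*l+1) 0 + (\<Sum>j\<in>{1..2*l}-{c}. ?s (2*j) 0)) mod 2
            = ((b (2*c) + (b (4*l+1) + T')) mod 2 + (b (4*l+1) + T')) mod 2"
        unfolding y2 s1 s2 by (simp add: ac_simps)
      also have "\<dots> = b (2*c) mod 2" by (rule cancel2)
      also have "\<dots> = b (2*c)" using bl[of "2*c"] 2 by auto
      finally have inner: "(?y (2*l) + ?s (4*l+1) 0 + (\<Sum>j\<in>{1..2*l}-{c}. ?s (2*j) 0)) mod 2 = b (2*c)" .
      have "val6 l i ?y ?s = (?y (c-1) + b (2*c)) mod 2"
        unfolding val6_def using ie inner by simp
      also have "\<dots> = ((b (2*c-1) + b (2*c)) mod 2 + b (2*c)) mod 2"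
        using pairval[of c l x] 2 unfolding b_def by simp
      also have "\<dots> = b (2*c-1) mod 2" by (rule cancel2)
      also have "\<dots> = b i"
      proof -
        have "2*c-1 \<in> {1..4*l+1}" using 2 by auto
        thus ?thesis using 2 bl[of "2*c-1"] by simp
      qed
      finally show ?thesis .
    next
      case 3
      have A: "A6 l i = {2*a-1}" using 3 A6_even[of a l] by simp
      have ie: "even i" "i \<noteq> 4*l+1" "i div 2 - 1 = a - 1" "i - 1 = 2*a-1" using 3 by auto
      have "val6 l i ?y ?s = (?y (a-1) + b (2*a-1)) mod 2"
        unfolding val6_def using ie sv A by simp
      also have "\<dots> = ((b (2*a) + b (2*a-1)) mod 2 + b (2*a-1)) mod 2"
        using pairval[of a l x] 3 unfolding b_def by (simp add: add.commute)
      also have "\<dots> = b (2*a) mod 2" by (rule cancel2)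
      also have "\<dots> = b i" using 3 bl[of "2*a"] by auto
      finally show ?thesis .
    qed
  qed
  thus ?thesis unfolding psi6_def using xz b_def by (auto simp: fun_eq_iff)
qed

lemma code6: "l \<ge> 1 \<Longrightarrow> has_index_code (4*l+1) (A6 l) 2 1 (2*l+1)"
  unfolding has_index_code_def is_index_code_def
proof (rule exI[of _ "phi6 l"], rule exI[of _ "psi6 l"], intro conjI ballI)
  fix x show "phi6 l x \<in> vecs 2 (2*l+1)" by (auto simp: phi6_def vecs_def)
next
  fix i x assume "l \<ge> 1" "i \<in> {1..4*l+1}" "x \<in> msgs 2 1 (4*l+1)"
  thus "psi6 l i (phi6 l x) (side_info (A6 l) i x) = x i" using decode6 by blast
qed

lemma beta6: "l \<ge> 1 \<Longrightarrow> beta_opt (4*l+1) (A6 l) = real (2*l+1)"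
  unfolding beta_opt_def
proof (rule cInf_eq_minimum)
  assume l: "l \<ge> 1"
  show "real (2*l+1) \<in> {real r / real t |q t r. primepow q \<and> 1 \<le> t \<and> has_index_code (4*l+1) (A6 l) q t r}"
    using code6[OF l] by (intro CollectI exI[of _ 2] exI[of _ 1] exI[of _ "2*l+1"]) simp
next
  fix z assume l: "l \<ge> 1"
    and "z \<in> {real r / real t |q t r. primepow q \<and> 1 \<le> t \<and> has_index_code (4*l+1) (A6 l) q t r}"
  then obtain q t r where z: "z = real r / real t" "primepow q" "1 \<le> t" "has_index_code (4*l+1) (A6 l) q t r"
    by blast
  then obtain phi psi where "is_index_code (4*l+1) (A6 l) q t r phi psi" unfolding has_index_code_def by blast
  hence "(2*l+1)*t \<le> r" using lower_bound[OF l z(2)] by blast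
  hence "real (2*l+1) * real t \<le> real r" by (metis of_nat_le_iff of_nat_mult)
  thus "real (2*l+1) \<le> z" using z(1,3) by (simp add: pos_le_divide_eq)
qed

theorem proposition10:
  fixes l :: nat
  assumes "l \<ge> 1"
  shows "umcd_outputs (4*l+1) (A6 l) \<noteq> {} \<and>
         (\<forall>k \<in> umcd_outputs (4*l+1) (A6 l). beta_opt (4*l+1) (A6 l) = real k)"
  using outputs6[OF assms] beta6[OF assms] by simp

end
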